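(* Let $(H,L_H)$ be a right-resolving and follower-separated labeled graph. Then $L_H$ is injective on the set $\mathcal R(L_H)$ of regular rays in $X_H$.
   Context: A labeled graph $(H,L_H)$: finite directed graph (vertices $V_H$, edges $E_H$, source/terminal maps $s_H,t_H$) without sinks or sources, labeling $L_H:E_H\to A$, edge shift $X_H$; $L_H$ acts coordinatewise, giving $L_H:X_H\to Y=L_H(X_H)$. Right-resolving: distinct edges with the same source have distinct labels. $f_H(v)=\{L_H(x): x$ a right-infinite path starting at $v\}$; follower-separated: $f_H(v)=f_H(w)$ implies $v=w$. For $x\in X_H$, $\mathbb U(x)=\{z\in X_H:\exists N\ \forall i\le N,\ z_i=x_i\}$ and similarly in $Y$; $x$ is a regular ray if $L_H$ maps $\mathbb U(x)$ onto $\mathbb U(L_H(x))$; $\mathcal R(L_H)$ is the set of regular rays. *)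

theory Defs
  imports Main
begin

definition labeled_graph ::
  "'v set \<Rightarrow> 'e set \<Rightarrow> ('e \<Rightarrow> 'v) \<Rightarrow> ('e \<Rightarrow> 'v) \<Rightarrow> ('e \<Rightarrow> 'a) \<Rightarrow> bool" where
  "labeled_graph V E s t lab \<longleftrightarrow>
     finite V \<and> finite E \<and> (\<forall>e\<in>E. s e \<in> V \<and> t e \<in> V) \<and>
     (\<forall>v\<in>V. \<exists>e\<in>E. s e = v) \<and> (\<forall>v\<in>V. \<exists>e\<in>E. t e = v)"

definition edge_shift :: "'e set \<Rightarrow> ('e \<Rightarrow> 'v) \<Rightarrow> ('e \<Rightarrow> 'v) \<Rightarrow> (int \<Rightarrow> 'e) set" where
  "edge_shift E s t = {x. \<forall>i. x i \<in> E \<and> t (x i) = s (x (i + 1))}"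

definition lab_map :: "('e \<Rightarrow> 'a) \<Rightarrow> (int \<Rightarrow> 'e) \<Rightarrow> (int \<Rightarrow> 'a)" where
  "lab_map lab x = (\<lambda>i. lab (x i))"

definition right_resolving :: "'e set \<Rightarrow> ('e \<Rightarrow> 'v) \<Rightarrow> ('e \<Rightarrow> 'a) \<Rightarrow> bool" where
  "right_resolving E s lab \<longleftrightarrow>
     (\<forall>e\<in>E. \<forall>e'\<in>E. e \<noteq> e' \<and> s e = s e' \<longrightarrow> lab e \<noteq> lab e')"

definition follower_set ::
  "'e set \<Rightarrow> ('e \<Rightarrow> 'v) \<Rightarrow> ('e \<Rightarrow> 'v) \<Rightarrow> ('e \<Rightarrow> 'a) \<Rightarrow> 'v \<Rightarrow> (nat \<Rightarrow> 'a) set" where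
  "follower_set E s t lab v =
     {(\<lambda>n. lab (p n)) | p. (\<forall>n. p n \<in> E \<and> t (p n) = s (p (Suc n))) \<and> s (p 0) = v}"

definition follower_separated ::
  "'v set \<Rightarrow> 'e set \<Rightarrow> ('e \<Rightarrow> 'v) \<Rightarrow> ('e \<Rightarrow> 'v) \<Rightarrow> ('e \<Rightarrow> 'a) \<Rightarrow> bool" where
  "follower_separated V E s t lab \<longleftrightarrow>
     (\<forall>v\<in>V. \<forall>w\<in>V. follower_set E s t lab v = follower_set E s t lab w \<longrightarrow> v = w)"

definition left_asym :: "(int \<Rightarrow> 'b) set \<Rightarrow> (int \<Rightarrow> 'b) \<Rightarrow> (int \<Rightarrow> 'b) set" where
  "left_asym S x = {z \<in> S. \<exists>N. \<forall>i\<le>N. z i = x i}"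

definition regular_rays ::
  "'e set \<Rightarrow> ('e \<Rightarrow> 'v) \<Rightarrow> ('e \<Rightarrow> 'v) \<Rightarrow> ('e \<Rightarrow> 'a) \<Rightarrow> (int \<Rightarrow> 'e) set" where
  "regular_rays E s t lab =
     {x \<in> edge_shift E s t.
        lab_map lab ` left_asym (edge_shift E s t) x
          = left_asym (lab_map lab ` edge_shift E s t) (lab_map lab x)}"

end

theory Submission
  imports Defs
begin

lemma propagate:
  assumes x: "x \<in> edge_shift E s t" and y: "y \<in> edge_shift E s t"
    and rr: "right_resolving E s lab"
    and lab: "\<And>j. N \<le> j \<Longrightarrow> j \<le> M \<Longrightarrow> lab (x j) = lab (y j)"
    and eq: "x N = y N"
  shows "N \<le> j \<Longrightarrow> j \<le> M \<Longrightarrow> x j = y j"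
proof (induction j rule: int_ge_induct)
  case base
  then show ?case using eq by simp
next
  case (step i)
  have "x i = y i" using step by simp
  moreover have "t (x i) = s (x (i+1))" "t (y i) = s (y (i+1))"
    using x y unfolding edge_shift_def by auto
  ultimately have "s (x (i+1)) = s (y (i+1))" by simp
  moreover have "lab (x (i+1)) = lab (y (i+1))" using lab step by simp
  moreover have "x (i+1) \<in> E" "y (i+1) \<in> E" using x y unfolding edge_shift_def by auto
  ultimately show ?case using rr unfolding right_resolving_def by blast
qed

lemma foll_sub:
  assumes x: "x \<in> edge_shift E s t" and x': "x' \<in> regular_rays E s t lab"
    and rr: "right_resolving E s lab"
    and eqL: "lab_map lab x = lab_map lab x'"
  shows "follower_set E s t lab (s (x i)) \<subseteq> follower_set E s t lab (s (x' i))"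
proof
  fix w assume "w \<in> follower_set E s t lab (s (x i))"
  then obtain p where w: "w = (\<lambda>n. lab (p n))" and pp: "\<forall>n. p n \<in> E \<and> t (p n) = s (p (Suc n))"
    and p0: "s (p 0) = s (x i)" unfolding follower_set_def by blast
  have xE: "\<And>j. x j \<in> E \<and> t (x j) = s (x (j+1))" using x unfolding edge_shift_def by auto
  have x'S: "x' \<in> edge_shift E s t" and reg: "lab_map lab ` left_asym (edge_shift E s t) x'
          = left_asym (lab_map lab ` edge_shift E s t) (lab_map lab x')"
    using x' unfolding regular_rays_def by auto
  define z where "z = (\<lambda>j. if j < i then x j else p (nat (j - i)))"
  have zS: "z \<in> edge_shift E s t"
    unfolding edge_shift_def
  proof (safe)
    fix j
    show "z j \<in> E" using xE pp unfolding z_def by auto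
    show "t (z j) = s (z (j+1))"
    proof (cases "j < i - 1")
      case True then show ?thesis using xE unfolding z_def by auto
    next
      case False
      show ?thesis
      proof (cases "j = i - 1")
        case True then show ?thesis using xE p0 unfolding z_def by auto
      next
        case False
        hence "j \<ge> i" using \<open>\<not> j < i - 1\<close> by simp
        hence "nat (j + 1 - i) = Suc (nat (j - i))" by simp
        then show ?thesis using pp \<open>j \<ge> i\<close> unfolding z_def by auto
      qed
    qed
  qed
  have "z \<in> left_asym (edge_shift E s t) x"
    unfolding left_asym_def using zS by (auto simp: z_def intro!: exI[of _ "i - 1"])
  have "\<forall>k\<le>i - 1. lab_map lab z k = lab_map lab x' k"
  proof (intro allI impI)
    fix k :: int assume "k \<le> i - 1"
    hence "z k = x k" by (simp add: z_def)
    thus "lab_map lab z k = lab_map lab x' k" using eqL unfolding lab_map_def by metis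
  qed
  hence "lab_map lab z \<in> left_asym (lab_map lab ` edge_shift E s t) (lab_map lab x')"
    unfolding left_asym_def using zS by blast
  hence "lab_map lab z \<in> lab_map lab ` left_asym (edge_shift E s t) x'" using reg by simp
  then obtain z' N where z'S: "z' \<in> edge_shift E s t" and z'N: "\<forall>k\<le>N. z' k = x' k"
    and lz: "lab_map lab z' = lab_map lab z"
    unfolding left_asym_def by auto
  have lzj: "\<And>j. lab (z' j) = lab (z j)" using lz unfolding lab_map_def by meson
  have lxj: "\<And>j. lab (x j) = lab (x' j)" using eqL unfolding lab_map_def by meson
  define M where "M = min N (i - 1)"
  have "z' (i - 1) = x' (i - 1)"
  proof (rule propagate[OF z'S x'S rr, of M "i - 1"])
    fix j assume "M \<le> j" "j \<le> i - 1"
    then show "lab (z' j) = lab (x' j)" using lzj lxj by (simp add: z_def)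
  next
    show "z' M = x' M" using z'N by (simp add: M_def)
  next
    show "M \<le> i - 1" by (simp add: M_def)
  qed simp
  moreover have "t (z' (i - 1)) = s (z' i)" "t (x' (i - 1)) = s (x' i)"
  proof -
    have "\<forall>j. t (z' j) = s (z' (j+1))" "\<forall>j. t (x' j) = s (x' (j+1))"
      using z'S x'S unfolding edge_shift_def by auto
    from this(1)[rule_format, of "i - 1"] this(2)[rule_format, of "i - 1"]
    show "t (z' (i - 1)) = s (z' i)" "t (x' (i - 1)) = s (x' i)" by simp_all
  qed
  ultimately have "s (z' i) = s (x' i)" by simp
  define p' where "p' = (\<lambda>n::nat. z' (i + int n))"
  have "\<forall>n. p' n \<in> E \<and> t (p' n) = s (p' (Suc n))"
    using z'S unfolding edge_shift_def p'_def by (simp add: algebra_simps)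
  moreover have "s (p' 0) = s (x' i)" using \<open>s (z' i) = s (x' i)\<close> by (simp add: p'_def)
  moreover have "w = (\<lambda>n. lab (p' n))"
    unfolding w p'_def using lzj by (simp add: z_def)
  ultimately show "w \<in> follower_set E s t lab (s (x' i))"
    unfolding follower_set_def by blast
qed

theorem lemma2p8:
  fixes V :: "'v set" and E :: "'e set" and s t :: "'e \<Rightarrow> 'v" and lab :: "'e \<Rightarrow> 'a"
  assumes "labeled_graph V E s t lab"
    and "right_resolving E s lab"
    and "follower_separated V E s t lab"
  shows "inj_on (lab_map lab) (regular_rays E s t lab)"
proof (rule inj_onI)
  fix x x' assume x: "x \<in> regular_rays E s t lab" and x': "x' \<in> regular_rays E s t lab"
    and eq: "lab_map lab x = lab_map lab x'"
  have xS: "x \<in> edge_shift E s t" and x'S: "x' \<in> edge_shift E s t"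
    using x x' unfolding regular_rays_def by auto
  show "x = x'"
  proof
    fix i
    have "follower_set E s t lab (s (x i)) = follower_set E s t lab (s (x' i))"
      using foll_sub[OF xS x' assms(2) eq] foll_sub[OF x'S x assms(2) eq[symmetric]] by blast
    moreover have E: "x i \<in> E" "x' i \<in> E" using xS x'S unfolding edge_shift_def by auto
    moreover have "s (x i) \<in> V" "s (x' i) \<in> V" using E assms(1) unfolding labeled_graph_def by auto
    ultimately have "s (x i) = s (x' i)" using assms(3) unfolding follower_separated_def by blast
    moreover have "lab (x i) = lab (x' i)" using eq unfolding lab_map_def by meson
    ultimately show "x i = x' i" using E assms(2) unfolding right_resolving_def by blast
  qed
qed

end
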